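(* Let $X,Y$ be finite-dimensional normed spaces and let $f\colon X\to Y$ be continuously open at $x^*\in X$, with maximal rate $g(r)=\Gamma_{f(x^* )}\big(f(\overline{\mathbb{B}}_r(x^* ))\big)$. Define the generalized inverse $$g^{\leftarrow}(s):=\inf\{r>0:\ g(r)\ge s\}.$$ Then for any $s$ and any $S\subset X$ satisfying $\overline{\mathbb{B}}_s(f(x^* ))\subset f(S)$, one has $$\sup_{x\in S}\|x-x^*\|\ \ge\ g^{\leftarrow}(s).$$
   Context: $\mathbb{B}_r(x)$ and $\overline{\mathbb{B}}_r(x)$ denote the open and closed balls of radius $r$ centered at $x$. For metric spaces $X,Y$ and $x\in X$, $f$ is continuously open at $x$ if there is a continuous, positive definite (i.e. $g(0)=0$, $g(r)>0$ for $r>0$), monotonically increasing function $g$ with $\mathbb{B}_{g(r)}(f(x))\subseteq f(\mathbb{B}_r(x))$ for all sufficiently small $r>0$. For a normed space $Z$, $z^*\in Z$ and $K\subseteq Z$, the inradius of $K$ at $z^*$ is $\Gamma_{z^*}(K)=\sup\{r\ge0:\mathbb{B}_r(z^* )\subseteq K\}$. *)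

theory Defs
  imports "HOL-Analysis.Analysis"
begin

definition fin_dim_space :: "'a::real_normed_vector itself \<Rightarrow> bool" where
  "fin_dim_space _ \<longleftrightarrow> (\<exists>B::'a set. finite B \<and> span B = UNIV)"

definition continuously_open_at ::
  "('a::metric_space \<Rightarrow> 'b::metric_space) \<Rightarrow> 'a \<Rightarrow> bool" where
  "continuously_open_at f x \<longleftrightarrow>
     (\<exists>g::real \<Rightarrow> real.
        continuous_on {0..} g \<and> g 0 = 0 \<and> (\<forall>r>0. g r > 0) \<and> mono_on {0..} g \<and>
        (\<exists>\<delta>>0. \<forall>r. 0 < r \<and> r < \<delta> \<longrightarrow> ball (f x) (g r) \<subseteq> f ` ball x r))"

definition inradius :: "'a::metric_space \<Rightarrow> 'a set \<Rightarrow> ereal" where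
  "inradius z K = Sup {ereal r | r. r \<ge> 0 \<and> ball z r \<subseteq> K}"

definition max_rate :: "('a::metric_space \<Rightarrow> 'b::metric_space) \<Rightarrow> 'a \<Rightarrow> real \<Rightarrow> ereal" where
  "max_rate f x r = inradius (f x) (f ` cball x r)"

text \<open>Generalized inverse: inf of the empty set is +infinity.\<close>
definition gen_inv :: "(real \<Rightarrow> ereal) \<Rightarrow> real \<Rightarrow> ereal" where
  "gen_inv g s = Inf {ereal r | r. r > 0 \<and> g r \<ge> ereal s}"

end

theory Submission
  imports Defs
begin

theorem corollary2:
  fixes f :: "'a::real_normed_vector \<Rightarrow> 'b::real_normed_vector"
    and xs :: 'a and s :: real and S :: "'a set"
  assumes "fin_dim_space TYPE('a)" and "fin_dim_space TYPE('b)"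
    and "continuously_open_at f xs"
    and "0 \<le> s"
    and "cball (f xs) s \<subseteq> f ` S"
  shows "(SUP x\<in>S. ereal (norm (x - xs))) \<ge> gen_inv (max_rate f xs) s"
proof -
  let ?M = "(SUP x\<in>S. ereal (norm (x - xs)))"
  have key: "gen_inv (max_rate f xs) s \<le> ereal r" if r0: "r > 0" and rS: "\<And>x. x \<in> S \<Longrightarrow> norm (x - xs) \<le> r" for r
  proof -
    have "S \<subseteq> cball xs r" using rS by (auto simp: dist_norm norm_minus_commute)
    hence "ball (f xs) s \<subseteq> f ` cball xs r" using assms(5) ball_subset_cball[of "f xs" s] by blast
    hence "ereal s \<le> max_rate f xs r"
      unfolding max_rate_def inradius_def using assms(4) by (intro Sup_upper) auto
    hence "ereal r \<in> {ereal r | r. r > 0 \<and> max_rate f xs r \<ge> ereal s}" using r0 by auto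
    thus ?thesis unfolding gen_inv_def by (rule Inf_lower)
  qed
  show ?thesis
  proof (rule ereal_le_real)
    fix z assume Mz: "?M \<le> ereal z"
    have nz: "norm (x - xs) \<le> z" if "x \<in> S" for x
    proof -
      have "ereal (norm (x - xs)) \<le> ?M" using that by (rule SUP_upper)
      with Mz have "ereal (norm (x - xs)) \<le> ereal z" by (rule order_trans[rotated])
      thus ?thesis by simp
    qed
    have "f xs \<in> f ` S" using assms(4,5) by auto
    then obtain x0 where "x0 \<in> S" by auto
    hence z0: "z \<ge> 0" using nz[of x0] norm_ge_zero[of "x0 - xs"] by linarith
    show "gen_inv (max_rate f xs) s \<le> ereal z"
    proof (rule ereal_le_epsilon2)
      fix e :: real assume "e > 0"
      have "gen_inv (max_rate f xs) s \<le> ereal (z + e)"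
        using \<open>e > 0\<close> z0 nz by (intro key) (auto, smt (verit))
      thus "gen_inv (max_rate f xs) s \<le> ereal z + ereal e" by simp
    qed
  qed
qed

end
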